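(* There is a universal constant $c>0$ such that the following holds. For any integers $k\ge 1$, $n\ge 2$ and any reals $G,\lambda>0$ with $G\ge 6\lambda$, there exist functions $f_1,\dots,f_n$ on $\mathbb{R}$ and an initialization point $x_0$ satisfying Assumption (A) with parameters $n,\lambda,G$, such that for every step size $\eta>0$, the iterate $x_k$ produced by the incremental gradient method after $k$ epochs satisfies \[ F(x_k)-\inf_x F(x)\;\ge\; c\cdot\min\left\{\lambda,\ \frac{G^2}{\lambda k^2}\right\}. \]
   Context: Assumption (A) (parameters $n\ge 2$, $\lambda>0$, $G>0$, on $\mathbb{R}^d$): $F(x)=\frac1n\sum_{i=1}^n f_i(x)$, where each $f_i:\mathbb{R}^d\to\mathbb{R}$ is a convex quadratic function $f_i(x)=x^\top A_ix+b_i^\top x$ (with $A_i$ symmetric positive semidefinite); $F$ is $\lambda$-strongly convex with unique minimizer $x^*$; each $\nabla f_i$ is $L$-Lipschitz for some $L\le 3\lambda$; each $f_i$ satisfies $\|\nabla f_i(x)\|\le G$ for all $x$ with $\|x-x^*\|\le 1$; and the initialization satisfies $\|x_0-x^*\|\le 1$. The incremental gradient method with constant step size $\eta>0$ starts at $x_0$ and runs $k$ epochs; each epoch performs the $n$ updates $x\leftarrow x-\eta\nabla f_j(x)$ for $j=1,2,\dots,n$ in this fixed order; $x_t$ denotes the iterate at the end of epoch $t$. *)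

theory Defs
  imports "HOL-Analysis.Analysis"
begin

text \<open>One-dimensional setting (d = 1). Component functions are indexed f 1, ..., f n.\<close>

text \<open>Convex quadratic on R: x^T A x + b^T x with A symmetric PSD, i.e. a x^2 + b x with a \<ge> 0.\<close>
definition convex_quadratic :: "(real \<Rightarrow> real) \<Rightarrow> bool" where
  "convex_quadratic g \<longleftrightarrow> (\<exists>a b. 0 \<le> a \<and> g = (\<lambda>x. a * x\<^sup>2 + b * x))"

definition strongly_convex_on :: "real set \<Rightarrow> (real \<Rightarrow> real) \<Rightarrow> real \<Rightarrow> bool" where
  "strongly_convex_on S g \<mu> \<longleftrightarrow> convex S \<and>
     (\<forall>x\<in>S. \<forall>y\<in>S. \<forall>t::real. 0 \<le> t \<and> t \<le> 1 \<longrightarrow>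
        g (t * x + (1 - t) * y) \<le> t * g x + (1 - t) * g y - \<mu> / 2 * t * (1 - t) * (x - y)\<^sup>2)"

definition avg_fun :: "nat \<Rightarrow> (nat \<Rightarrow> real \<Rightarrow> real) \<Rightarrow> real \<Rightarrow> real" where
  "avg_fun n f = (\<lambda>x. (1 / real n) * (\<Sum>i=1..n. f i x))"

definition assumption_A :: "nat \<Rightarrow> real \<Rightarrow> real \<Rightarrow> (nat \<Rightarrow> real \<Rightarrow> real) \<Rightarrow> real \<Rightarrow> bool" where
  "assumption_A n lam G f x0 \<longleftrightarrow>
     2 \<le> n \<and> 0 < lam \<and> 0 < G \<and>
     (\<forall>i\<in>{1..n}. convex_quadratic (f i)) \<and>
     strongly_convex_on UNIV (avg_fun n f) lam \<and>
     (\<exists>L. L \<le> 3 * lam \<and> (\<forall>i\<in>{1..n}. L-lipschitz_on UNIV (deriv (f i)))) \<and>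
     (\<exists>xs. (\<forall>y. avg_fun n f xs \<le> avg_fun n f y) \<and>
           (\<forall>z. (\<forall>y. avg_fun n f z \<le> avg_fun n f y) \<longrightarrow> z = xs) \<and>
           (\<forall>i\<in>{1..n}. \<forall>x. \<bar>x - xs\<bar> \<le> 1 \<longrightarrow> \<bar>deriv (f i) x\<bar> \<le> G) \<and>
           \<bar>x0 - xs\<bar> \<le> 1)"

definition ig_epoch :: "nat \<Rightarrow> (nat \<Rightarrow> real \<Rightarrow> real) \<Rightarrow> real \<Rightarrow> real \<Rightarrow> real" where
  "ig_epoch n f \<eta> x = fold (\<lambda>j y. y - \<eta> * deriv (f j) y) [1..<n+1] x"

definition ig_iterate :: "nat \<Rightarrow> (nat \<Rightarrow> real \<Rightarrow> real) \<Rightarrow> real \<Rightarrow> real \<Rightarrow> nat \<Rightarrow> real" where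
  "ig_iterate n f \<eta> x0 k = (ig_epoch n f \<eta> ^^ k) x0"

end

theory Submission
  imports Defs
begin

lemma fold_affine:
  fixes r d x :: real
  assumes "\<forall>j\<in>set xs. \<forall>y. g j y = r*y + d"
  shows "fold g xs x = r^length xs * x + d * (\<Sum>i<length xs. r^i)"
  using assms
proof (induction xs arbitrary: x)
  case Nil then show ?case by simp
next
  case (Cons a xs)
  have "fold g (a#xs) x = fold g xs (r*x + d)" using Cons.prems by simp
  also have "\<dots> = r^length xs * (r*x+d) + d*(\<Sum>i<length xs. r^i)" using Cons by simp
  also have "\<dots> = r^length (a#xs) * x + d*(\<Sum>i<length (a#xs). r^i)"
    by (simp add: algebra_simps)
  finally show ?case .
qed

lemma deriv_quad: "deriv (\<lambda>x. a*x^2 + b*x) y = 2*a*y + (b::real)"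
  by (rule DERIV_imp_deriv) (auto intro!: derivative_eq_intros)

lemma affine_iter_nonneg:
  assumes "(P::real) \<ge> 0" "Q \<ge> 0" "x \<ge> 0"
  shows "((\<lambda>x. P*x+Q)^^j) x \<ge> 0"
  using assms by (induction j) auto

lemma affine_iter_ge:
  assumes "(P::real) \<ge> 0" "Q \<ge> 0" "x \<ge> 0" "1 \<le> j"
  shows "((\<lambda>x. P*x+Q)^^j) x \<ge> Q"
proof -
  obtain i where j: "j = Suc i" using assms(4) by (cases j) auto
  have "((\<lambda>x. P*x+Q)^^i) x \<ge> 0" using affine_iter_nonneg assms by blast
  then show ?thesis using j assms by simp
qed

lemma affine_iter_closed:
  assumes "(P::real) \<noteq> 1"
  shows "((\<lambda>x. P*x+Q)^^j) x = Q/(1-P) + P^j*(x - Q/(1-P))"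
proof (induction j)
  case 0 then show ?case by simp
next
  case (Suc j)
  have d: "1 - P \<noteq> 0" using assms by simp
  define xb where "xb = Q/(1-P)"
  have Q: "Q = xb*(1-P)" using d by (simp add: xb_def)
  have "((\<lambda>x. P*x+Q)^^Suc j) x = P*(xb + P^j*(x - xb)) + Q" using Suc by (simp add: xb_def)
  also have "\<dots> = xb + P^Suc j*(x - xb)" unfolding Q by (simp add: algebra_simps)
  finally show ?case by (simp add: xb_def)
qed

lemma inf_quad: assumes "(A::real) \<ge> 0" shows "(INF x. A * x^2) = 0"
proof (rule antisym)
  have bdd: "bdd_below (range (\<lambda>x. A*x^2))"
    using assms by (auto simp: bdd_below_def intro!: exI[of _ 0])
  have "(INF x. A * x^2) \<le> A*0^2" by (rule cINF_lower[OF bdd]) auto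
  then show "(INF x. A * x^2) \<le> 0" by simp
  show "0 \<le> (INF x. A * x^2)" by (rule cINF_greatest) (use assms in auto)
qed

theorem theorem3:
  shows "\<exists>c::real. c > 0 \<and>
    (\<forall>(k::nat) (n::nat) (G::real) (lam::real).
       1 \<le> k \<longrightarrow> 2 \<le> n \<longrightarrow> 0 < G \<longrightarrow> 0 < lam \<longrightarrow> 6 * lam \<le> G \<longrightarrow>
       (\<exists>(f::nat \<Rightarrow> real \<Rightarrow> real) (x0::real).
          assumption_A n lam G f x0 \<and>
          (\<forall>\<eta>::real. 0 < \<eta> \<longrightarrow>
             avg_fun n f (ig_iterate n f \<eta> x0 k) - (INF x. avg_fun n f x)
               \<ge> c * min lam (G\<^sup>2 / (lam * (real k)\<^sup>2)))))"
proof (intro exI[of _ "1/28800"] conjI allI impI)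
  show "(0::real) < 1/28800" by simp
  fix k n :: nat and G lam :: real
  assume hk: "1 \<le> k" and hn: "2 \<le> n" and hG: "0 < G" and hl: "0 < lam" and h6: "6*lam \<le> G"
  define h where "h = 2*(n div 6)+1"
  have h1: "1 \<le> h" "2*h \<le> n" "n \<le> 6*h" "odd h" unfolding h_def using hn by presburger+
  define ca where "ca = (\<lambda>i::nat. if i \<le> 2*h then 3*lam/2 else (0::real))"
  define cb where "cb = (\<lambda>i::nat. if i \<le> h then G/2 else if i \<le> 2*h then -G/2 else (0::real))"
  define f where "f = (\<lambda>i x. ca i * x^2 + cb i * x)"
  define A where "A = 3*lam*h/n"
  have df: "\<And>i y. deriv (f i) y = 2*ca i*y + cb i" unfolding f_def by (rule deriv_quad)
  have U1: "{1..n} = {1..2*h} \<union> {2*h<..n}" using h1 by auto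
  have U2: "{1..2*h} = {1..h} \<union> {h<..2*h}" using h1 by auto
  have sa: "(\<Sum>i=1..n. ca i) = 3*lam*h"
  proof -
    have "(\<Sum>i=1..n. ca i) = (\<Sum>i\<in>{1..2*h}. ca i) + (\<Sum>i\<in>{2*h<..n}. ca i)"
      unfolding U1 by (rule sum.union_disjoint) auto
    also have "(\<Sum>i\<in>{1..2*h}. ca i) = (\<Sum>i\<in>{1..2*h}. 3*lam/2)"
      by (rule sum.cong) (auto simp: ca_def)
    also have "(\<Sum>i\<in>{2*h<..n}. ca i) = 0"
      by (rule sum.neutral) (auto simp: ca_def)
    finally show ?thesis by simp
  qed
  have sb: "(\<Sum>i=1..n. cb i) = 0"
  proof -
    have "(\<Sum>i=1..n. cb i) = (\<Sum>i\<in>{1..2*h}. cb i) + (\<Sum>i\<in>{2*h<..n}. cb i)"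
      unfolding U1 by (rule sum.union_disjoint) auto
    also have "(\<Sum>i\<in>{1..2*h}. cb i) = (\<Sum>i\<in>{1..h}. cb i) + (\<Sum>i\<in>{h<..2*h}. cb i)"
      unfolding U2 by (rule sum.union_disjoint) auto
    also have "(\<Sum>i\<in>{1..h}. cb i) = (\<Sum>i\<in>{1..h}. G/2)"
      by (rule sum.cong) (auto simp: cb_def)
    also have "(\<Sum>i\<in>{h<..2*h}. cb i) = (\<Sum>i\<in>{h<..2*h}. -G/2)"
      by (rule sum.cong) (auto simp: cb_def)
    also have "(\<Sum>i\<in>{2*h<..n}. cb i) = 0"
      by (rule sum.neutral) (auto simp: cb_def)
    finally show ?thesis by simp
  qed
  have avg: "avg_fun n f = (\<lambda>x. A * x^2)"
  proof
    fix x
    have "(\<Sum>i=1..n. f i x) = x^2 * (\<Sum>i=1..n. ca i) + x * (\<Sum>i=1..n. cb i)"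
      by (simp add: f_def sum.distrib sum_distrib_left algebra_simps)
    then show "avg_fun n f x = A * x^2" using sa sb hn by (simp add: avg_fun_def A_def)
  qed
  have A_ge: "lam/2 \<le> A"
  proof -
    have "real n \<le> 6 * real h" using h1 by linarith
    then have "lam * real n \<le> 6 * lam * real h" using hl by (simp add: mult_left_mono)
    then show ?thesis using hn by (simp add: A_def field_simps)
  qed
  have Apos: "0 < A" using A_ge hl by linarith
  have INF0: "(INF x. avg_fun n f x) = 0" using inf_quad[of A] Apos by (simp add: avg)
  show "\<exists>f x0. assumption_A n lam G f x0 \<and>
          (\<forall>\<eta>::real. 0 < \<eta> \<longrightarrow>
             avg_fun n f (ig_iterate n f \<eta> x0 k) - (INF x. avg_fun n f x)
               \<ge> 1/28800 * min lam (G\<^sup>2 / (lam * (real k)\<^sup>2)))"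
  proof (intro exI[of _ f] exI[of _ 1] conjI allI impI)
    have cq: "\<forall>i\<in>{1..n}. convex_quadratic (f i)"
      unfolding convex_quadratic_def
    proof
      fix i :: nat
      show "\<exists>a b. 0 \<le> a \<and> f i = (\<lambda>x. a * x\<^sup>2 + b * x)"
        by (rule exI[of _ "ca i"], rule exI[of _ "cb i"]) (use hl in \<open>auto simp: ca_def f_def\<close>)
    qed
    have sc: "strongly_convex_on UNIV (avg_fun n f) lam"
      unfolding strongly_convex_on_def avg
    proof (intro conjI ballI allI impI)
      show "convex (UNIV::real set)" by simp
      fix x y t :: real assume t: "0 \<le> t \<and> t \<le> 1"
      have tt: "0 \<le> t*(1-t)" using t by simp
      have e: "t * (A * x\<^sup>2) + (1 - t) * (A * y\<^sup>2) - lam / 2 * t * (1 - t) * (x - y)\<^sup>2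
          - A * (t * x + (1 - t) * y)\<^sup>2 = (A - lam/2) * (t*(1-t)) * (x-y)^2"
        by (simp add: power2_eq_square algebra_simps)
      have "0 \<le> (A - lam/2) * (t*(1-t)) * (x-y)^2" using A_ge tt by simp
      then show "A * (t * x + (1 - t) * y)\<^sup>2
         \<le> t * (A * x\<^sup>2) + (1 - t) * (A * y\<^sup>2) - lam / 2 * t * (1 - t) * (x - y)\<^sup>2"
        using e by linarith
    qed
    have lip: "\<exists>L. L \<le> 3 * lam \<and> (\<forall>i\<in>{1..n}. L-lipschitz_on UNIV (deriv (f i)))"
    proof (intro exI[of _ "3*lam"] conjI ballI)
      fix i assume "i \<in> {1..n}"
      have c: "\<bar>2*ca i\<bar> \<le> 3*lam" using hl by (simp add: ca_def)
      show "(3*lam)-lipschitz_on UNIV (deriv (f i))"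
        unfolding lipschitz_on_def df
      proof (intro conjI ballI)
        show "0 \<le> 3*lam" using hl by simp
        fix x y :: real
        have "dist (2 * ca i * x + cb i) (2 * ca i * y + cb i) = \<bar>2*ca i\<bar> * dist x y"
          by (simp add: dist_real_def abs_mult[symmetric] algebra_simps)
        also have "\<dots> \<le> 3*lam * dist x y" using c by (simp add: mult_right_mono)
        finally show "dist (2 * ca i * x + cb i) (2 * ca i * y + cb i) \<le> 3*lam * dist x y" .
      qed
    qed simp
    have mn: "\<exists>xs. (\<forall>y. avg_fun n f xs \<le> avg_fun n f y) \<and>
           (\<forall>z. (\<forall>y. avg_fun n f z \<le> avg_fun n f y) \<longrightarrow> z = xs) \<and>
           (\<forall>i\<in>{1..n}. \<forall>x. \<bar>x - xs\<bar> \<le> 1 \<longrightarrow> \<bar>deriv (f i) x\<bar> \<le> G) \<and>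
           \<bar>1 - xs\<bar> \<le> (1::real)"
    proof (intro exI[of _ 0] conjI allI impI ballI)
      fix y show "avg_fun n f 0 \<le> avg_fun n f y" using Apos by (simp add: avg)
    next
      fix z assume "\<forall>y. avg_fun n f z \<le> avg_fun n f y"
      then have "A*z^2 \<le> A*0^2" unfolding avg by blast
      then show "z = 0" using Apos by (simp add: mult_le_0_iff)
    next
      fix i x assume "i \<in> {1..n}" and x: "\<bar>x - 0\<bar> \<le> (1::real)"
      have a: "\<bar>2*ca i*x\<bar> \<le> 3*lam"
      proof -
        have "\<bar>2*ca i*x\<bar> = \<bar>2*ca i\<bar> * \<bar>x\<bar>" by (simp add: abs_mult)
        also have "\<dots> \<le> 3*lam * 1" using x hl
          by (intro mult_mono) (auto simp: ca_def)
        finally show ?thesis by simp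
      qed
      have b: "\<bar>cb i\<bar> \<le> G/2" using hG by (simp add: cb_def)
      show "\<bar>deriv (f i) x\<bar> \<le> G" unfolding df using a b h6 by linarith
    qed simp
    show "assumption_A n lam G f 1"
      unfolding assumption_A_def using hn hl hG cq sc lip mn by blast
  next
    fix \<eta> :: real assume he: "0 < \<eta>"
    define u where "u = 3*\<eta>*lam"
    define r where "r = 1 - u"
    define T where "T = (\<Sum>i<h. r^i)"
    define v where "v = r^h"
    define P where "P = v^2"
    define Q where "Q = \<eta>*G/2*T*(1-v)"
    have u0: "0 < u" using he hl by (simp add: u_def)
    let ?g = "\<lambda>j y. y - \<eta> * deriv (f j) y"
    have s1: "fold ?g [1..<h+1] x = r^h*x + (-(\<eta>*G/2))*T" for x
    proof -
      have "fold ?g [1..<h+1] x = r^length [1..<h+1] * x + (-(\<eta>*G/2)) * (\<Sum>i<length [1..<h+1]. r^i)"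
        by (rule fold_affine) (auto simp: df ca_def cb_def r_def u_def algebra_simps)
      then show ?thesis by (simp add: T_def del: upt_Suc)
    qed
    have s2: "fold ?g [h+1..<2*h+1] x = r^h*x + (\<eta>*G/2)*T" for x
    proof -
      have "fold ?g [h+1..<2*h+1] x = r^length [h+1..<2*h+1] * x + (\<eta>*G/2) * (\<Sum>i<length [h+1..<2*h+1]. r^i)"
        by (rule fold_affine) (auto simp: df ca_def cb_def r_def u_def algebra_simps)
      then show ?thesis by (simp add: T_def del: upt_Suc)
    qed
    have s3: "fold ?g [2*h+1..<n+1] x = x" for x
    proof -
      have "fold ?g [2*h+1..<n+1] x = 1^length [2*h+1..<n+1] * x + 0 * (\<Sum>i<length [2*h+1..<n+1]. (1::real)^i)"
        by (rule fold_affine) (auto simp: df ca_def cb_def)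
      then show ?thesis by (simp del: upt_Suc)
    qed
    have seg1: "[1..<n+1] = [1..<h+1] @ [h+1..<n+1]"
      using upt_add_eq_append[of 1 "h+1" "n-h"] h1 by simp
    have seg2: "[h+1..<n+1] = [h+1..<2*h+1] @ [2*h+1..<n+1]"
      using upt_add_eq_append[of "h+1" "2*h+1" "n-2*h"] h1 by simp
    have E: "ig_epoch n f \<eta> = (\<lambda>x. P*x+Q)"
    proof
      fix x
      have "ig_epoch n f \<eta> x = fold ?g [2*h+1..<n+1] (fold ?g [h+1..<2*h+1] (fold ?g [1..<h+1] x))"
        unfolding ig_epoch_def seg1 seg2 by simp
      also have "\<dots> = r^h*(r^h*x + (-(\<eta>*G/2))*T) + (\<eta>*G/2)*T" by (simp only: s1 s2 s3)
      also have "\<dots> = P*x+Q" by (simp add: P_def Q_def v_def power2_eq_square field_simps)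
      finally show "ig_epoch n f \<eta> x = P*x+Q" .
    qed
    have uT: "u*T = 1 - v" using one_diff_power_eq[of r h] by (simp add: T_def v_def r_def)
    have Qf: "Q = G*(1-v)^2/(6*lam)"
    proof -
      have "Q*(6*lam) = G*(u*T)*(1-v)" by (simp add: Q_def u_def field_simps)
      also have "\<dots> = G*(1-v)^2" by (simp add: uT power2_eq_square)
      finally show ?thesis using hl by (simp add: field_simps)
    qed
    have Q0: "0 \<le> Q" unfolding Qf using hG hl by simp
    have P0: "0 \<le> P" unfolding P_def by simp
    define xk where "xk = ig_iterate n f \<eta> 1 k"
    have xk: "xk = ((\<lambda>x. P*x+Q)^^k) 1" by (simp add: xk_def ig_iterate_def E)
    have G6: "1 \<le> G/(6*lam)" using hl h6 by (simp add: field_simps)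
    have key: "1/2 \<le> xk \<or> G/(120*lam*k) \<le> xk"
    proof (cases "v \<le> 0")
      case True
      have "1 \<le> 1-v" using True by simp
      then have "1*1 \<le> (1-v)*(1-v)" by (intro mult_mono) auto
      then have "1 \<le> (1-v)^2" by (simp add: power2_eq_square)
      then have "G/(6*lam) * 1 \<le> G/(6*lam) * (1-v)^2"
        using hG hl by (intro mult_left_mono) auto
      then have "1 \<le> Q" using G6 unfolding Qf by simp
      moreover have "Q \<le> xk" unfolding xk using affine_iter_ge[OF P0 Q0, of 1 k] hk by simp
      ultimately show ?thesis by simp
    next
      case False
      then have v0: "0 < v" by simp
      have r0: "0 \<le> r" using v0 zero_le_odd_power[OF h1(4), of r] unfolding v_def by simp
      have r1: "r \<le> 1" using u0 by (simp add: r_def)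
      have vr: "v \<le> r" unfolding v_def using power_decreasing[of 1 h r] r0 r1 h1 by simp
      have v1: "v < 1" using vr u0 by (simp add: r_def)
      have u1: "u \<le> 1" using r0 by (simp add: r_def)
      have "v * v < (1::real) * 1" using v0 v1 by (intro mult_strict_mono) auto
      then have P1: "P < 1" unfolding P_def by (simp add: power2_eq_square)
      define xb where "xb = Q/(1-P)"
      have xb: "xb = G*(1-v)/(6*lam*(1+v))"
      proof -
        have d: "1 - P = (1-v)*(1+v)" by (simp add: P_def power2_eq_square algebra_simps)
        have nz: "1-v \<noteq> 0" "1+v \<noteq> 0" using v0 v1 by auto
        have q: "xb * ((1-v)*(1+v)) = Q" using d nz by (simp add: xb_def)
        have "(1-v)*(xb*(1+v)*(6*lam)) = xb*((1-v)*(1+v))*(6*lam)" by (simp add: ac_simps)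
        also have "\<dots> = G*(1-v)^2" using q Qf hl by simp
        also have "\<dots> = (1-v)*(G*(1-v))" by (simp add: power2_eq_square ac_simps)
        finally have e: "xb*(1+v)*(6*lam) = G*(1-v)" using nz by simp
        have b: "6*lam*(1+v) \<noteq> 0" using nz hl by simp
        have "xb*(6*lam*(1+v)) = G*(1-v)" using e by (simp add: ac_simps)
        then show ?thesis using b by (simp add: eq_divide_eq)
      qed
      have xb_ge: "G*(1-v)/(12*lam) \<le> xb"
        unfolding xb using v0 v1 hl hG
        by (intro divide_left_mono) (auto intro!: mult_pos_pos)
      have xb0: "0 \<le> xb" using xb_ge v1 hG hl by (smt (verit) divide_nonneg_pos mult_nonneg_nonneg)
      have "xk = xb + P^k*(1-xb)" unfolding xk xb_def
        by (rule affine_iter_closed) (use P1 in simp)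
      then have cl: "xk = P^k + (1-P^k)*xb" by (simp add: algebra_simps)
      have Pk0: "0 \<le> P^k" "P^k \<le> 1" using P0 P1 by (auto intro: power_le_one)
      show ?thesis
      proof (cases "1/2 \<le> P^k")
        case True
        then show ?thesis using cl Pk0 xb0 by (smt (verit) mult_nonneg_nonneg)
      next
        case False
        have "P^k = (1 + (-u))^(2*h*k)" unfolding P_def v_def r_def
          by (simp add: power_mult[symmetric] ac_simps)
        moreover have "1 + real (2*h*k) * (-u) \<le> (1 + (-u))^(2*h*k)"
          by (rule Bernoulli_inequality) (use u1 in simp)
        ultimately have B: "1 - 2*real h*real k*u < 1/2" using False by simp
        define t where "t = real h * u"
        have t4: "1 < 4*real k*t" using B by (simp add: t_def algebra_simps)
        have t0: "0 \<le> t" using u0 by (simp add: t_def)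
        have "1 + real h * u \<le> (1+u)^h"
          using Bernoulli_inequality[of u h] u0 by simp
        then have "v * (1+t) \<le> v * (1+u)^h" using v0 by (simp add: t_def)
        also have "v * (1+u)^h = (1 - u^2)^h" unfolding v_def r_def
          by (simp add: power_mult_distrib[symmetric] power2_eq_square algebra_simps)
        also have "\<dots> \<le> 1" using u0 u1 by (intro power_le_one) (auto simp: power_le_one)
        finally have vt: "v * (1+t) \<le> 1" .
        have w: "1 \<le> (1-v)*(4*real k+1)"
        proof (rule ccontr)
          assume "\<not> ?thesis"
          then have c1: "(1-v)*(4*real k+1) < 1" by simp
          have "t \<le> (1-v)*(1+t)" using vt by (simp add: algebra_simps)
          then have "t*(4*real k+1) \<le> (1-v)*(1+t)*(4*real k+1)" by (rule mult_right_mono) simp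
          also have "\<dots> = ((1-v)*(4*real k+1))*(1+t)" by (simp add: ac_simps)
          also have "\<dots> < 1*(1+t)" using c1 t0 by (intro mult_strict_right_mono) auto
          finally show False using t4 by (simp add: algebra_simps)
        qed
        have kpos: "1 \<le> real k" using hk by simp
        have w5: "1/(5*real k) \<le> 1-v"
        proof -
          have "1 \<le> (1-v)*(5*real k)" using w v1 kpos
            by (smt (verit) mult_left_mono)
          then show ?thesis using kpos by (simp add: field_simps)
        qed
        have "G/(60*lam*real k) = G/(12*lam) * (1/(5*real k))" by (simp add: field_simps)
        also have "\<dots> \<le> G/(12*lam) * (1-v)" using w5 hG hl by (intro mult_left_mono) auto
        also have "\<dots> = G*(1-v)/(12*lam)" by simp
        also have "\<dots> \<le> xb" by (rule xb_ge)
        finally have xg: "G/(60*lam*real k) \<le> xb" .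
        have "1/2 * xb \<le> (1-P^k)*xb" using False xb0 by (intro mult_right_mono) auto
        then have "1/2 * xb \<le> xk" using cl Pk0 by simp
        moreover have "G/(120*lam*real k) = 1/2 * (G/(60*lam*real k))" by simp
        ultimately show ?thesis using xg by simp
      qed
    qed
    have gap: "avg_fun n f (ig_iterate n f \<eta> 1 k) - (INF x. avg_fun n f x) = A*xk^2"
      using INF0 by (simp add: avg xk_def)
    have kpos: "0 < real k" using hk by simp
    show "avg_fun n f (ig_iterate n f \<eta> 1 k) - (INF x. avg_fun n f x)
               \<ge> 1/28800 * min lam (G\<^sup>2 / (lam * (real k)\<^sup>2))"
      using key
    proof
      assume x: "1/2 \<le> xk"
      have "(1/2)^2 \<le> xk^2" using x by (intro power_mono) auto
      then have "lam/2 * (1/4) \<le> A * xk^2" using A_ge hl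
        by (intro mult_mono) (auto simp: power2_eq_square)
      moreover have "1/28800 * min lam (G\<^sup>2 / (lam * (real k)\<^sup>2)) \<le> 1/28800 * lam"
        by simp
      ultimately show ?thesis using hl gap by linarith
    next
      assume x: "G/(120*lam*k) \<le> xk"
      have "(G/(120*lam*k))^2 \<le> xk^2" using x hG hl kpos by (intro power_mono) auto
      then have "lam/2 * (G/(120*lam*k))^2 \<le> A * xk^2" using A_ge hl
        by (intro mult_mono) auto
      moreover have "lam/2 * (G/(120*lam*k))^2 = 1/28800 * (G^2/(lam*(real k)^2))"
        using hl kpos by (simp add: field_simps power2_eq_square)
      moreover have "1/28800 * min lam (G\<^sup>2 / (lam * (real k)\<^sup>2)) \<le> 1/28800 * (G^2/(lam*(real k)^2))"
        by simp
      ultimately show ?thesis using gap by linarith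
    qed
  qed
qed

end
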